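(* Let $(H,G,\alpha,f)$ be a normalized crossed system such that $f$ is symmetric, i.e. $f(g_1,g_2)=f(g_2,g_1)$ for all $g_1,g_2\in G$. Then $$Z(H\#_\alpha^f G)=\{(h,g)\in H^G\times Z(G)\ :\ g\triangleright h'=h^{-1}h'h\ \text{for all } h'\in H\},$$ where $H^G=\{h\in H: g\triangleright h=h \text{ for all } g\in G\}$.
   Context: For groups $H,G$ and a map $\alpha:G\to\mathrm{Aut}(H)$ write $g\triangleright h:=\alpha(g)(h)$. A normalized crossed system is a quadruple $(H,G,\alpha,f)$ with maps $\alpha:G\to\mathrm{Aut}(H)$, $f:G\times G\to H$, $f(1,1)=1$, such that for all $g_1,g_2,g_3\in G$, $h\in H$: (WA) $g_1\triangleright(g_2\triangleright h)=f(g_1,g_2)\big((g_1g_2)\triangleright h\big)f(g_1,g_2)^{-1}$ and (CC) $f(g_1,g_2)f(g_1g_2,g_3)=\big(g_1\triangleright f(g_2,g_3)\big)f(g_1,g_2g_3)$. The crossed product $H\#_\alpha^f G$ is the group on the set $H\times G$ with multiplication $(h_1,g_1)\cdot(h_2,g_2)=\big(h_1(g_1\triangleright h_2)f(g_1,g_2),g_1g_2\big)$. *)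

theory Defs
  imports "HOL-Algebra.Algebra"
begin

definition grp_center :: "('a, 'b) monoid_scheme \<Rightarrow> 'a set" where
  "grp_center G = {z \<in> carrier G. \<forall>x \<in> carrier G. z \<otimes>\<^bsub>G\<^esub> x = x \<otimes>\<^bsub>G\<^esub> z}"

text \<open>Normalized crossed system (H, G, alpha, f); alpha g h stands for g |> h.\<close>
definition crossed_system ::
  "('h, 'c) monoid_scheme \<Rightarrow> ('g, 'd) monoid_scheme \<Rightarrow> ('g \<Rightarrow> 'h \<Rightarrow> 'h) \<Rightarrow> ('g \<Rightarrow> 'g \<Rightarrow> 'h) \<Rightarrow> bool"
where
  "crossed_system H G \<alpha> f \<longleftrightarrow>
     group H \<and> group G \<and>
     (\<forall>g \<in> carrier G. \<alpha> g \<in> iso H H) \<and>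
     (\<forall>g1 \<in> carrier G. \<forall>g2 \<in> carrier G. f g1 g2 \<in> carrier H) \<and>
     f \<one>\<^bsub>G\<^esub> \<one>\<^bsub>G\<^esub> = \<one>\<^bsub>H\<^esub> \<and>
     (\<forall>g1 \<in> carrier G. \<forall>g2 \<in> carrier G. \<forall>h \<in> carrier H.
        \<alpha> g1 (\<alpha> g2 h) = f g1 g2 \<otimes>\<^bsub>H\<^esub> \<alpha> (g1 \<otimes>\<^bsub>G\<^esub> g2) h \<otimes>\<^bsub>H\<^esub> inv\<^bsub>H\<^esub> (f g1 g2)) \<and>
     (\<forall>g1 \<in> carrier G. \<forall>g2 \<in> carrier G. \<forall>g3 \<in> carrier G.
        f g1 g2 \<otimes>\<^bsub>H\<^esub> f (g1 \<otimes>\<^bsub>G\<^esub> g2) g3 = \<alpha> g1 (f g2 g3) \<otimes>\<^bsub>H\<^esub> f g1 (g2 \<otimes>\<^bsub>G\<^esub> g3))"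

definition crossed_product ::
  "('h, 'c) monoid_scheme \<Rightarrow> ('g, 'd) monoid_scheme \<Rightarrow> ('g \<Rightarrow> 'h \<Rightarrow> 'h) \<Rightarrow> ('g \<Rightarrow> 'g \<Rightarrow> 'h) \<Rightarrow> ('h \<times> 'g) monoid"
where
  "crossed_product H G \<alpha> f =
     \<lparr> carrier = carrier H \<times> carrier G,
       monoid.mult = (\<lambda>(h1, g1) (h2, g2).
                 (h1 \<otimes>\<^bsub>H\<^esub> \<alpha> g1 h2 \<otimes>\<^bsub>H\<^esub> f g1 g2, g1 \<otimes>\<^bsub>G\<^esub> g2)),
       monoid.one = (inv\<^bsub>H\<^esub> (f \<one>\<^bsub>G\<^esub> \<one>\<^bsub>G\<^esub>), \<one>\<^bsub>G\<^esub>) \<rparr>"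

definition fixed_pts ::
  "('h, 'c) monoid_scheme \<Rightarrow> ('g, 'd) monoid_scheme \<Rightarrow> ('g \<Rightarrow> 'h \<Rightarrow> 'h) \<Rightarrow> 'h set"
where
  "fixed_pts H G \<alpha> = {h \<in> carrier H. \<forall>g \<in> carrier G. \<alpha> g h = h}"

end

theory Submission
  imports Defs
begin

theorem corollary1p11:
  assumes "crossed_system H G \<alpha> f"
    and "\<forall>g1 \<in> carrier G. \<forall>g2 \<in> carrier G. f g1 g2 = f g2 g1"
  shows "grp_center (crossed_product H G \<alpha> f) =
           {(h, g). h \<in> fixed_pts H G \<alpha> \<and> g \<in> grp_center G \<and>
              (\<forall>h' \<in> carrier H. \<alpha> g h' = inv\<^bsub>H\<^esub> h \<otimes>\<^bsub>H\<^esub> h' \<otimes>\<^bsub>H\<^esub> h)}"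
proof -
  interpret H: group H using assms(1) unfolding crossed_system_def by blast
  interpret G: group G using assms(1) unfolding crossed_system_def by blast
  have hom: "\<And>g. g \<in> carrier G \<Longrightarrow> \<alpha> g \<in> hom H H"
    using assms(1) unfolding crossed_system_def iso_def by blast
  have acl: "\<And>g x. g \<in> carrier G \<Longrightarrow> x \<in> carrier H \<Longrightarrow> \<alpha> g x \<in> carrier H"
    using hom by (meson hom_in_carrier)
  have a1: "\<And>g. g \<in> carrier G \<Longrightarrow> \<alpha> g \<one>\<^bsub>H\<^esub> = \<one>\<^bsub>H\<^esub>"
    using hom by (meson H.group_axioms group_hom.hom_one group_hom_axioms.intro group_hom.intro)
  have fcl: "\<And>a b. a \<in> carrier G \<Longrightarrow> b \<in> carrier G \<Longrightarrow> f a b \<in> carrier H"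
    using assms(1) unfolding crossed_system_def by blast
  have key: "((h \<otimes>\<^bsub>H\<^esub> \<alpha> g h' \<otimes>\<^bsub>H\<^esub> f g g', g \<otimes>\<^bsub>G\<^esub> g') =
              (h' \<otimes>\<^bsub>H\<^esub> \<alpha> g' h \<otimes>\<^bsub>H\<^esub> f g' g, g' \<otimes>\<^bsub>G\<^esub> g))
        \<longleftrightarrow> (h \<otimes>\<^bsub>H\<^esub> \<alpha> g h' = h' \<otimes>\<^bsub>H\<^esub> \<alpha> g' h \<and> g \<otimes>\<^bsub>G\<^esub> g' = g' \<otimes>\<^bsub>G\<^esub> g)"
    if "h \<in> carrier H" "h' \<in> carrier H" "g \<in> carrier G" "g' \<in> carrier G" for h h' g g'
  proof -
    have "f g g' = f g' g" using assms(2) that by blast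
    then show ?thesis using that acl fcl by (simp add: H.r_cancel)
  qed
  have center: "(h, g) \<in> grp_center (crossed_product H G \<alpha> f) \<longleftrightarrow>
     h \<in> carrier H \<and> g \<in> carrier G \<and>
     (\<forall>h' \<in> carrier H. \<forall>g' \<in> carrier G. h \<otimes>\<^bsub>H\<^esub> \<alpha> g h' = h' \<otimes>\<^bsub>H\<^esub> \<alpha> g' h \<and> g \<otimes>\<^bsub>G\<^esub> g' = g' \<otimes>\<^bsub>G\<^esub> g)"
    for h g
  proof -
    have "(h, g) \<in> grp_center (crossed_product H G \<alpha> f) \<longleftrightarrow>
      h \<in> carrier H \<and> g \<in> carrier G \<and>
      (\<forall>h' \<in> carrier H. \<forall>g' \<in> carrier G.
        (h \<otimes>\<^bsub>H\<^esub> \<alpha> g h' \<otimes>\<^bsub>H\<^esub> f g g', g \<otimes>\<^bsub>G\<^esub> g') =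
        (h' \<otimes>\<^bsub>H\<^esub> \<alpha> g' h \<otimes>\<^bsub>H\<^esub> f g' g, g' \<otimes>\<^bsub>G\<^esub> g))"
      unfolding grp_center_def crossed_product_def by auto
    also have "\<dots> \<longleftrightarrow> h \<in> carrier H \<and> g \<in> carrier G \<and>
     (\<forall>h' \<in> carrier H. \<forall>g' \<in> carrier G. h \<otimes>\<^bsub>H\<^esub> \<alpha> g h' = h' \<otimes>\<^bsub>H\<^esub> \<alpha> g' h \<and> g \<otimes>\<^bsub>G\<^esub> g' = g' \<otimes>\<^bsub>G\<^esub> g)"
      using key by (metis (no_types, lifting))
    finally show ?thesis .
  qed
  {
    fix h g
    have "(h, g) \<in> grp_center (crossed_product H G \<alpha> f) \<longleftrightarrow>
      (h, g) \<in> {(h, g). h \<in> fixed_pts H G \<alpha> \<and> g \<in> grp_center G \<and>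
              (\<forall>h' \<in> carrier H. \<alpha> g h' = inv\<^bsub>H\<^esub> h \<otimes>\<^bsub>H\<^esub> h' \<otimes>\<^bsub>H\<^esub> h)}"
      (is "?L \<longleftrightarrow> ?R")
    proof
      assume L: ?L
      hence hc: "h \<in> carrier H" and gc: "g \<in> carrier G" and
        C: "\<And>h' g'. h' \<in> carrier H \<Longrightarrow> g' \<in> carrier G \<Longrightarrow>
              h \<otimes>\<^bsub>H\<^esub> \<alpha> g h' = h' \<otimes>\<^bsub>H\<^esub> \<alpha> g' h \<and> g \<otimes>\<^bsub>G\<^esub> g' = g' \<otimes>\<^bsub>G\<^esub> g"
        using center by auto
      have fxd: "\<alpha> g' h = h" if "g' \<in> carrier G" for g'
      proof -
        have "h \<otimes>\<^bsub>H\<^esub> \<alpha> g \<one>\<^bsub>H\<^esub> = \<one>\<^bsub>H\<^esub> \<otimes>\<^bsub>H\<^esub> \<alpha> g' h" using C[OF H.one_closed that] by blast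
        thus ?thesis using a1 gc hc acl that by simp
      qed
      have conj: "\<alpha> g h' = inv\<^bsub>H\<^esub> h \<otimes>\<^bsub>H\<^esub> h' \<otimes>\<^bsub>H\<^esub> h" if "h' \<in> carrier H" for h'
      proof -
        have e: "h \<otimes>\<^bsub>H\<^esub> \<alpha> g h' = h' \<otimes>\<^bsub>H\<^esub> h" using C[OF that gc] fxd[OF gc] by simp
        have "\<alpha> g h' = inv\<^bsub>H\<^esub> h \<otimes>\<^bsub>H\<^esub> (h \<otimes>\<^bsub>H\<^esub> \<alpha> g h')"
          using hc acl gc that by (simp add: H.m_assoc[symmetric])
        also have "\<dots> = inv\<^bsub>H\<^esub> h \<otimes>\<^bsub>H\<^esub> h' \<otimes>\<^bsub>H\<^esub> h" using e hc that by (simp add: H.m_assoc)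
        finally show ?thesis .
      qed
      show ?R using hc gc fxd conj C unfolding fixed_pts_def grp_center_def by auto
    next
      assume ?R
      hence hc: "h \<in> carrier H" and gc: "g \<in> carrier G" and fx: "\<And>g'. g' \<in> carrier G \<Longrightarrow> \<alpha> g' h = h"
        and gz: "\<And>g'. g' \<in> carrier G \<Longrightarrow> g \<otimes>\<^bsub>G\<^esub> g' = g' \<otimes>\<^bsub>G\<^esub> g"
        and cj: "\<And>h'. h' \<in> carrier H \<Longrightarrow> \<alpha> g h' = inv\<^bsub>H\<^esub> h \<otimes>\<^bsub>H\<^esub> h' \<otimes>\<^bsub>H\<^esub> h"
        unfolding fixed_pts_def grp_center_def by auto
      have "h \<otimes>\<^bsub>H\<^esub> \<alpha> g h' = h' \<otimes>\<^bsub>H\<^esub> \<alpha> g' h" if "h' \<in> carrier H" "g' \<in> carrier G" for h' g'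
        using cj[OF that(1)] fx[OF that(2)] hc that(1) by (simp add: H.m_assoc[symmetric])
      thus ?L using center hc gc gz by auto
    qed
    note this
  }
  note main = this
  show ?thesis
  proof (rule Set.set_eqI)
    fix x
    show "x \<in> grp_center (crossed_product H G \<alpha> f) \<longleftrightarrow> x \<in> {(h, g). h \<in> fixed_pts H G \<alpha> \<and> g \<in> grp_center G \<and>
              (\<forall>h' \<in> carrier H. \<alpha> g h' = inv\<^bsub>H\<^esub> h \<otimes>\<^bsub>H\<^esub> h' \<otimes>\<^bsub>H\<^esub> h)}"
      using main[of "fst x" "snd x"] by simp
  qed
qed

end
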